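(* Let $\lambda\in\Lambda$ and $z\in\mathbb C_p$. (i) If $\rho<|z|<1$, then $|Q_\lambda(z)|=p|z|^p>|z|$. (ii) If $|z|\le\rho$, then $|Q_\lambda(z)|\le\rho$. (iii) If $|z-1|<1$, then $|Q_\lambda(z)-1|=p|z-1|$. (iv) If $1<|z|<\hat r$, then $|Q_\lambda(z)|=p|z|^{p+1}$.
   Context: Let $p$ be a prime, $\mathbb C_p$ with $p$-adic absolute value, $|p|=1/p$. $\Lambda=\{\lambda\in\mathbb C_p:|\lambda-1|<1\}$, $P_\lambda(z)=\frac{\lambda}{p}z^p+\left(1-\frac{\lambda}{p}\right)z^{p+1}$, $\rho=p^{-1/(p-1)}$. Fix $\hat r\in|\mathbb C_p^*|$, $\hat r>1$, $B=\{z:|z|\le\hat r\}$; $\mathcal H(B)$ is the ring of power series $\sum a_iz^i$ convergent on $B$ with norm $\|f\|_B=\sup_i|a_i|\hat r^{\,i}$. Fix $Q\in\mathcal H(B)$ with $\|Q\|_B<\rho$, $Q^*_\lambda=P_\lambda+Q$, and let $h(\lambda)$ be the unique fixed point of $Q^*_\lambda$ in $\{z:|z-1|\le|Q(1)|/p\}$. Define $Q_\lambda(z)=P_\lambda(z+h(\lambda)-1)+Q(z+h(\lambda)-1)+1-h(\lambda)$ for $z\in B$ (the conjugate of $Q^*_\lambda$ by $A_\lambda(z)=z+h(\lambda)-1$). *)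

theory Defs
  imports "HOL-Analysis.Analysis" "HOL-Computational_Algebra.Polynomial"
begin

text \<open>A model of C_p: an algebraically closed field of characteristic 0 (the type 'a)
  with an absolute value v that is non-archimedean, satisfies v p = 1/p, is complete,
  and in which the algebraic numbers are dense.  These properties characterise C_p up to
  isometric isomorphism.\<close>

definition nonarch_abs :: "('a::field \<Rightarrow> real) \<Rightarrow> bool" where
  "nonarch_abs v \<longleftrightarrow> (\<forall>x. 0 \<le> v x) \<and> (\<forall>x. v x = 0 \<longleftrightarrow> x = 0)
     \<and> (\<forall>x y. v (x * y) = v x * v y) \<and> (\<forall>x y. v (x + y) \<le> max (v x) (v y))"

definition v_cauchy :: "('a::field \<Rightarrow> real) \<Rightarrow> (nat \<Rightarrow> 'a) \<Rightarrow> bool" where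
  "v_cauchy v X \<longleftrightarrow> (\<forall>e>0. \<exists>N. \<forall>m\<ge>N. \<forall>n\<ge>N. v (X m - X n) < e)"

definition v_lim :: "('a::field \<Rightarrow> real) \<Rightarrow> (nat \<Rightarrow> 'a) \<Rightarrow> 'a \<Rightarrow> bool" where
  "v_lim v X L \<longleftrightarrow> (\<lambda>n. v (X n - L)) \<longlonglongrightarrow> 0"

definition v_complete :: "('a::field \<Rightarrow> real) \<Rightarrow> bool" where
  "v_complete v \<longleftrightarrow> (\<forall>X. v_cauchy v X \<longrightarrow> (\<exists>L. v_lim v X L))"

definition is_Cp :: "nat \<Rightarrow> ('a::{alg_closed_field, field_char_0} \<Rightarrow> real) \<Rightarrow> bool" where
  "is_Cp p v \<longleftrightarrow> prime p \<and> nonarch_abs v \<and> v (of_nat p) = 1 / real p \<and> v_complete v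
     \<and> (\<forall>x e. e > 0 \<longrightarrow> (\<exists>y. algebraic y \<and> v (x - y) < e))"

definition rho :: "nat \<Rightarrow> real" where
  "rho p = real p powr (- 1 / (real p - 1))"

definition ps_converges_at :: "('a::field \<Rightarrow> real) \<Rightarrow> (nat \<Rightarrow> 'a) \<Rightarrow> 'a \<Rightarrow> bool" where
  "ps_converges_at v a z \<longleftrightarrow> (\<exists>s. v_lim v (\<lambda>n. \<Sum>i<n. a i * z ^ i) s)"

definition ps_eval :: "('a::field \<Rightarrow> real) \<Rightarrow> (nat \<Rightarrow> 'a) \<Rightarrow> 'a \<Rightarrow> 'a" where
  "ps_eval v a z = (THE s. v_lim v (\<lambda>n. \<Sum>i<n. a i * z ^ i) s)"

definition in_HB :: "('a::field \<Rightarrow> real) \<Rightarrow> real \<Rightarrow> (nat \<Rightarrow> 'a) \<Rightarrow> bool" where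
  "in_HB v r a \<longleftrightarrow> (\<forall>z. v z \<le> r \<longrightarrow> ps_converges_at v a z)"

definition HB_norm :: "('a::field \<Rightarrow> real) \<Rightarrow> real \<Rightarrow> (nat \<Rightarrow> 'a) \<Rightarrow> real" where
  "HB_norm v r a = (SUP i. v (a i) * r ^ i)"

definition P_lam :: "nat \<Rightarrow> 'a::field \<Rightarrow> 'a \<Rightarrow> 'a" where
  "P_lam p lam z = lam / of_nat p * z ^ p + (1 - lam / of_nat p) * z ^ (p + 1)"

definition Qstar :: "('a::field \<Rightarrow> real) \<Rightarrow> nat \<Rightarrow> (nat \<Rightarrow> 'a) \<Rightarrow> 'a \<Rightarrow> 'a \<Rightarrow> 'a" where
  "Qstar v p a lam z = P_lam p lam z + ps_eval v a z"

definition h_fix :: "('a::field \<Rightarrow> real) \<Rightarrow> nat \<Rightarrow> (nat \<Rightarrow> 'a) \<Rightarrow> 'a \<Rightarrow> 'a" where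
  "h_fix v p a lam = (THE w. v (w - 1) \<le> v (ps_eval v a 1) / real p \<and> Qstar v p a lam w = w)"

definition Q_lam :: "('a::field \<Rightarrow> real) \<Rightarrow> nat \<Rightarrow> (nat \<Rightarrow> 'a) \<Rightarrow> 'a \<Rightarrow> 'a \<Rightarrow> 'a" where
  "Q_lam v p a lam z = (let h = h_fix v p a lam in
     P_lam p lam (z + h - 1) + ps_eval v a (z + h - 1) + 1 - h)"

end

theory Submission
  imports Defs
begin

locale vfield =
  fixes v :: "'a::field \<Rightarrow> real"
  assumes nav: "nonarch_abs v"
begin

lemma vge: "0 \<le> v x" using nav unfolding nonarch_abs_def by blast
lemma vz: "v x = 0 \<longleftrightarrow> x = 0" using nav unfolding nonarch_abs_def by blast
lemma vmult: "v (x * y) = v x * v y" using nav unfolding nonarch_abs_def by blast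
lemma vadd: "v (x + y) \<le> max (v x) (v y)" using nav unfolding nonarch_abs_def by blast
lemma v0[simp]: "v 0 = 0" using vz by simp
lemma v1[simp]: "v 1 = 1"
proof -
  have "v 1 = v 1 * v 1" using vmult[of 1 1] by simp
  moreover have "v 1 \<noteq> 0" using vz by simp
  ultimately show ?thesis by (metis mult_cancel_left1)
qed
lemma vneg1: "v (-1) = 1"
proof -
  have "v (-1) * v (-1) = 1" using vmult[of "-1" "-1"] by simp
  then have "v (-1) ^ 2 = 1 ^ 2" by (simp add: power2_eq_square)
  then show ?thesis using vge[of "-1"] by (metis power2_eq_iff_nonneg zero_le_one)
qed
lemma vneg[simp]: "v (- x) = v x"
  using vmult[of "-1" x] vneg1 by simp
lemma vcomm: "v (x - y) = v (y - x)"
  by (metis minus_diff_eq vneg)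
lemma vdiff: "v (x - y) \<le> max (v x) (v y)"
  using vadd[of x "-y"] by simp
lemma vpow: "v (x ^ n) = v x ^ n"
  by (induction n) (auto simp: vmult)
lemma vinv: "v (inverse x) = inverse (v x)"
proof (cases "x = 0")
  case False
  then have "v x * v (inverse x) = 1" by (metis right_inverse v1 vmult)
  from inverse_unique[OF this] show ?thesis by simp
qed simp
lemma vdiv: "v (x / y) = v x / v y"
  by (simp add: divide_inverse vmult vinv)
lemma vnat: "v (of_nat n) \<le> 1"
proof (induction n)
  case (Suc n) then show ?case using vadd[of "of_nat n" 1] by (simp add: add.commute)
qed simp
lemma vstrict: "v y < v x \<Longrightarrow> v (x + y) = v x"
proof -
  assume a: "v y < v x"
  have "v x \<le> max (v (x + y)) (v (-y))" using vadd[of "x+y" "-y"] by simp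
  then have "v x \<le> v (x + y)" using a by auto
  moreover have "v (x + y) \<le> v x" using vadd[of x y] a by simp
  ultimately show ?thesis by simp
qed
lemma vadd3: "v (x + y + w) \<le> max (v x) (max (v y) (v w))"
  using vadd[of "x+y" w] vadd[of x y] by simp
lemma vsum: "finite A \<Longrightarrow> 0 \<le> B \<Longrightarrow> (\<And>i. i \<in> A \<Longrightarrow> v (f i) \<le> B) \<Longrightarrow> v (sum f A) \<le> B"
proof (induction A rule: finite_induct)
  case (insert x F)
  have "v (f x) \<le> B" "v (sum f F) \<le> B" using insert by auto
  then show ?case using vadd[of "f x" "sum f F"] insert(1,2) by (simp add: max.bounded_iff order_trans)
qed simp

lemma lim_unique: "v_lim v X L1 \<Longrightarrow> v_lim v X L2 \<Longrightarrow> L1 = L2"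
proof -
  assume a: "v_lim v X L1" "v_lim v X L2"
  have t: "(\<lambda>n. max (v (X n - L1)) (v (X n - L2))) \<longlonglongrightarrow> max 0 0"
    using a unfolding v_lim_def by (intro tendsto_max) auto
  have "\<forall>n. v (L1 - L2) \<le> max (v (X n - L1)) (v (X n - L2))"
  proof
    fix n
    have "L1 - L2 = (X n - L2) - (X n - L1)" by simp
    then show "v (L1 - L2) \<le> max (v (X n - L1)) (v (X n - L2))"
      using vdiff[of "X n - L2" "X n - L1"] by (simp add: max.commute)
  qed
  then have "v (L1 - L2) \<le> 0" using LIMSEQ_le_const[OF t] by auto
  then show ?thesis using vge[of "L1 - L2"] vz by force
qed

lemma lim_bound: "v_lim v X L \<Longrightarrow> (\<And>n. v (X n) \<le> B) \<Longrightarrow> v L \<le> B"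
proof -
  assume a: "v_lim v X L" and b: "\<And>n. v (X n) \<le> B"
  have B0: "0 \<le> B" using b[of 0] vge[of "X 0"] by simp
  have t: "(\<lambda>n. max B (v (X n - L))) \<longlonglongrightarrow> max B 0"
    using a unfolding v_lim_def by (intro tendsto_max) auto
  have "\<forall>n. v L \<le> max B (v (X n - L))"
  proof
    fix n
    have "L = X n - (X n - L)" by simp
    then have "v L \<le> max (v (X n)) (v (X n - L))" using vdiff[of "X n" "X n - L"] by simp
    then show "v L \<le> max B (v (X n - L))" using b[of n] by linarith
  qed
  then have "v L \<le> max B 0" using LIMSEQ_le_const[OF t] by auto
  then show ?thesis using B0 by simp
qed

lemma lim_squeeze: "(\<lambda>n. f n) \<longlonglongrightarrow> 0 \<Longrightarrow> (\<And>n. v (X n - L) \<le> f n) \<Longrightarrow> v_lim v X L"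
  unfolding v_lim_def
  by (rule real_tendsto_sandwich[where f="\<lambda>n. 0" and h=f]) (auto simp: vge)

lemma lim_diff: "v_lim v X L \<Longrightarrow> v_lim v Y M \<Longrightarrow> v_lim v (\<lambda>n. X n - Y n) (L - M)"
proof -
  assume a: "v_lim v X L" "v_lim v Y M"
  have t: "(\<lambda>n. max (v (X n - L)) (v (Y n - M))) \<longlonglongrightarrow> max 0 0"
    using a unfolding v_lim_def by (intro tendsto_max) auto
  show ?thesis
  proof (rule lim_squeeze)
    show "(\<lambda>n. max (v (X n - L)) (v (Y n - M))) \<longlonglongrightarrow> 0" using t by simp
    fix n
    have e: "X n - Y n - (L - M) = (X n - L) - (Y n - M)" by simp
    show "v (X n - Y n - (L - M)) \<le> max (v (X n - L)) (v (Y n - M))"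
      unfolding e by (rule vdiff)
  qed
qed

lemma vle1: "v (x - 1) \<le> 1 \<Longrightarrow> v x \<le> 1"
  using vadd[of "x - 1" 1] by simp

lemma pow_lip: "v x \<le> 1 \<Longrightarrow> v y \<le> 1 \<Longrightarrow> v (x ^ n - y ^ n) \<le> v (x - y)"
proof (induction n)
  case 0 then show ?case by (simp add: vge)
next
  case (Suc n)
  have e: "x ^ Suc n - y ^ Suc n = x * (x ^ n - y ^ n) + (x - y) * y ^ n" by (simp add: algebra_simps)
  have 1: "v (x * (x ^ n - y ^ n)) \<le> v (x - y)"
    using Suc mult_mono[of "v x" 1 "v (x ^ n - y ^ n)" "v (x - y)"] vge by (simp add: vmult)
  have 2: "v ((x - y) * y ^ n) \<le> v (x - y)"
    using Suc by (simp add: vmult vpow mult_left_le power_le_one vge)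
  show ?case using e 1 2 vadd[of "x * (x ^ n - y ^ n)" "(x - y) * y ^ n"] by simp
qed

lemma key_pow:
  assumes r: "0 \<le> r" "r \<le> 1" and x: "v (x - 1) \<le> r" and y: "v (y - 1) \<le> r"
  shows "v (x ^ n - y ^ n - of_nat n * (x - y)) \<le> r * v (x - y)"
proof (induction n)
  case 0 then show ?case using r by (simp add: vge)
next
  case (Suc n)
  have vx: "v x \<le> 1" using vle1 x r by simp
  have vy: "v y \<le> 1" using vle1 y r by simp
  have e: "x ^ Suc n - y ^ Suc n - of_nat (Suc n) * (x - y)
     = x * (x ^ n - y ^ n - of_nat n * (x - y)) + (x - y) * (of_nat n * (x - 1) + (y ^ n - 1))"
    by (simp add: algebra_simps)
  have 1: "v (x * (x ^ n - y ^ n - of_nat n * (x - y))) \<le> r * v (x - y)"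
    unfolding vmult using Suc vx vge mult_mono[of "v x" 1 "v (x ^ n - y ^ n - of_nat n * (x - y))" "r * v (x - y)"] r
    by simp
  have a1: "v (of_nat n * (x - 1)) \<le> r"
    unfolding vmult using vnat[of n] x vge by (metis mult_left_le_one_le order_trans)
  have a2: "v (y ^ n - 1) \<le> r"
    using pow_lip[OF vy, of 1 n] y by simp
  have "v (of_nat n * (x - 1) + (y ^ n - 1)) \<le> r" using vadd a1 a2 by (meson max.boundedI order_trans)
  then have 2: "v ((x - y) * (of_nat n * (x - 1) + (y ^ n - 1))) \<le> r * v (x - y)"
    unfolding vmult by (metis mult.commute mult_right_mono vge)
  show ?case unfolding e using 1 2 vadd by (meson max.boundedI order_trans)
qed

end
locale setting = vfield v for v :: "'a::field \<Rightarrow> real" +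
  fixes p :: nat and rhat :: real and a :: "nat \<Rightarrow> 'a" and lam c0 :: 'a
  assumes pprime: "prime p" and vp: "v (of_nat p) = 1 / real p"
    and vcomp: "v_complete v" and rhat_gt: "rhat > 1" and c0: "v c0 = rhat"
    and HB: "in_HB v rhat a" and Nlt: "HB_norm v rhat a < rho p"
    and lam: "v (lam - 1) < 1"
begin

definition "N = HB_norm v rhat a"
definition "Q z = ps_eval v a z"
definition "S z n = (\<Sum>i<n. a i * z ^ i)"

lemma p2: "p \<ge> 2" using pprime prime_ge_2_nat by blast
lemma pnz: "(of_nat p :: 'a) \<noteq> 0" using vp p2 by auto

lemma rho_facts: "0 < rho p" "rho p < 1" "real p * rho p ^ (p - 1) = 1" "real p * rho p ^ p = rho p"
proof -
  have pg: "real p > 1" using p2 by simp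
  show r0: "0 < rho p" unfolding rho_def using pg by simp
  show "rho p < 1" unfolding rho_def using pg by (intro powr_less_one) auto
  have "rho p ^ (p - 1) = rho p powr real (p - 1)" using r0 by (simp add: powr_realpow)
  also have "\<dots> = real p powr (-1 / (real p - 1) * real (p - 1))" unfolding rho_def by (simp add: powr_powr)
  also have "-1 / (real p - 1) * real (p - 1) = -1" using pg p2 by (simp add: of_nat_diff)
  finally have "rho p ^ (p - 1) = 1 / real p" using pg by (simp add: powr_neg_one)
  then show e: "real p * rho p ^ (p - 1) = 1" using pg by simp
  have "rho p ^ p = rho p * rho p ^ (p - 1)" using p2 by (metis Suc_diff_1 less_le_trans pos2 power_Suc)
  then show "real p * rho p ^ p = rho p" using e by (metis mult.left_commute mult_1_right)
qed

lemma conv: "v z \<le> rhat \<Longrightarrow> v_lim v (S z) (Q z)"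
proof -
  assume "v z \<le> rhat"
  then obtain s where s: "v_lim v (S z) s" using HB unfolding in_HB_def ps_converges_at_def S_def by blast
  have "Q z = s" unfolding Q_def ps_eval_def S_def[symmetric]
    using s lim_unique by blast
  then show ?thesis using s by simp
qed

lemma Sdiff: "S z (Suc n) - S z n = a n * z ^ n" unfolding S_def by simp

lemma bdd: "bdd_above (range (\<lambda>i. v (a i) * rhat ^ i))"
proof -
  have l: "v_lim v (S c0) (Q c0)" using conv c0 by simp
  then have "Bseq (\<lambda>n. v (S c0 n - Q c0))" unfolding v_lim_def by (intro convergent_imp_Bseq convergentI)
  then obtain K where K: "\<And>n. norm (v (S c0 n - Q c0)) \<le> K" by (metis BseqE)
  have "v (a i) * rhat ^ i \<le> K" for i
  proof -
    have "a i * c0 ^ i = (S c0 (Suc i) - Q c0) - (S c0 i - Q c0)" using Sdiff by simp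
    then have "v (a i * c0 ^ i) \<le> max (v (S c0 (Suc i) - Q c0)) (v (S c0 i - Q c0))" using vdiff by metis
    moreover have "v (S c0 (Suc i) - Q c0) \<le> K" "v (S c0 i - Q c0) \<le> K" using K vge by (metis real_norm_def abs_of_nonneg)+
    ultimately show ?thesis by (simp add: vmult vpow c0)
  qed
  then show ?thesis by (intro bdd_aboveI) auto
qed

lemma termb: "v (a i) * rhat ^ i \<le> N"
  unfolding N_def HB_norm_def using cSUP_upper[OF UNIV_I bdd] .

lemma N0: "0 \<le> N" using termb[of 0] vge[of "a 0"] by simp
lemma N_rho: "N < rho p" using Nlt N_def by simp
lemma N1: "N < 1" using N_rho rho_facts by simp

lemma Qbound: "v z \<le> rhat \<Longrightarrow> v (Q z) \<le> N"
proof -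
  assume z: "v z \<le> rhat"
  show ?thesis
  proof (rule lim_bound[OF conv[OF z]])
    fix n show "v (S z n) \<le> N" unfolding S_def
    proof (rule vsum)
      fix i
      have "v (z ^ i) \<le> rhat ^ i" unfolding vpow using z vge by (simp add: power_mono)
      then have "v (a i * z ^ i) \<le> v (a i) * rhat ^ i" unfolding vmult by (simp add: mult_left_mono vge)
      then show "v (a i * z ^ i) \<le> N" using termb order_trans by blast
    qed (auto simp: N0)
  qed
qed

lemma Qlip: "v z \<le> 1 \<Longrightarrow> v w \<le> 1 \<Longrightarrow> v (Q z - Q w) \<le> N * v (z - w)"
proof -
  assume z: "v z \<le> 1" and w: "v w \<le> 1"
  have lz: "v_lim v (S z) (Q z)" using conv z rhat_gt by simp
  have lw: "v_lim v (S w) (Q w)" using conv w rhat_gt by simp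
  show ?thesis
  proof (rule lim_bound[OF lim_diff[OF lz lw]])
    fix n
    have e: "S z n - S w n = (\<Sum>i<n. a i * (z ^ i - w ^ i))" unfolding S_def
      by (simp add: sum_subtractf algebra_simps)
    show "v (S z n - S w n) \<le> N * v (z - w)" unfolding e
    proof (rule vsum)
      fix i
      have "v (a i * (z ^ i - w ^ i)) \<le> v (a i) * v (z - w)" unfolding vmult
        using pow_lip[OF z w, of i] by (simp add: mult_left_mono vge)
      also have "\<dots> \<le> v (a i) * rhat ^ i * v (z - w)"
      proof -
        have "1 \<le> rhat ^ i" using rhat_gt by (simp add: one_le_power)
        then have "v (z - w) \<le> rhat ^ i * v (z - w)" using vge[of "z - w"] mult_right_mono by fastforce
        then show ?thesis using vge[of "a i"] mult_left_mono by (fastforce simp: mult.assoc)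
      qed
      also have "\<dots> \<le> N * v (z - w)" using termb vge by (simp add: mult_right_mono)
      finally show "v (a i * (z ^ i - w ^ i)) \<le> N * v (z - w)" .
    qed (auto simp: N0 vge)
  qed
qed

end
context setting begin

definition "lp = lam / of_nat p"
definition "c1 = of_nat p + 1 - lp"
definition "cc = of_nat p - lp"
definition "R = v (Q 1) / real p"
definition "T x = x - (Qstar v p a lam x - x) / cc"

lemma Pform: "P_lam p lam x = lp * x ^ p + (1 - lp) * x ^ (p + 1)"
  by (simp add: P_lam_def lp_def)

lemma vlam: "v lam = 1"
proof -
  have "lam = 1 + (lam - 1)" by simp
  then show ?thesis using vstrict[of "lam - 1" 1] lam by simp
qed

lemma pgt: "real p > 1" "1 / real p < real p"
proof -
  show g: "real p > 1" using p2 by simp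
  have "1 / real p < 1" using g by simp
  then show "1 / real p < real p" using g by linarith
qed

lemma vlp: "v lp = real p"
  unfolding lp_def vdiv vlam vp by simp

lemma vcc: "v cc = real p"
proof -
  have "cc = - lp + of_nat p" unfolding cc_def by simp
  then show ?thesis using vstrict[of "of_nat p" "- lp"] vlp vp pgt by simp
qed

lemma vc1: "v c1 = real p"
proof -
  have "c1 = - lp + of_nat (p + 1)" unfolding c1_def by simp
  moreover have "v (of_nat (p + 1)) < real p" using vnat[of "p+1"] pgt by linarith
  ultimately show ?thesis using vstrict[of "of_nat (p+1)" "- lp"] vlp by simp
qed

lemma v1lp: "v (1 - lp) = real p"
proof -
  have "1 - lp = - lp + 1" by simp
  then show ?thesis using vstrict[of 1 "- lp"] vlp pgt by simp
qed

lemma ccnz: "cc \<noteq> 0" using vcc p2 vz by force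

lemma Pkey:
  assumes r: "0 \<le> r" "r \<le> 1" and x: "v (x - 1) \<le> r" and y: "v (y - 1) \<le> r"
  shows "v (P_lam p lam x - P_lam p lam y - c1 * (x - y)) \<le> real p * r * v (x - y)"
proof -
  have e: "P_lam p lam x - P_lam p lam y - c1 * (x - y)
    = lp * (x ^ p - y ^ p - of_nat p * (x - y))
      + (1 - lp) * (x ^ (p + 1) - y ^ (p + 1) - of_nat (p + 1) * (x - y))"
    unfolding Pform c1_def by (simp add: algebra_simps)
  have 1: "v (lp * (x ^ p - y ^ p - of_nat p * (x - y))) \<le> real p * r * v (x - y)"
    unfolding vmult vlp using mult_left_mono[OF key_pow[OF r x y, of p], of "real p"] by (simp add: mult.assoc)
  have 2: "v ((1 - lp) * (x ^ (p + 1) - y ^ (p + 1) - of_nat (p + 1) * (x - y))) \<le> real p * r * v (x - y)"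
    unfolding vmult v1lp using mult_left_mono[OF key_pow[OF r x y, of "p+1"], of "real p"] by (simp add: mult.assoc)
  show ?thesis unfolding e using 1 2 vadd by (meson max.boundedI order_trans)
qed

lemma Q1: "v (Q 1) \<le> N" using Qbound rhat_gt by simp
lemma R0: "0 \<le> R" unfolding R_def using vge by simp
lemma RN: "R \<le> N / real p" unfolding R_def using Q1 pgt by (simp add: divide_right_mono)
lemma Nk: "N / real p \<le> N" using N0 pgt by (simp add: divide_le_eq mult_le_cancel_left1 mult_le_cancel_left_pos)
lemma R1: "R < 1" using RN Nk N1 by linarith
lemma Rrho: "R < rho p" using RN Nk N_rho by linarith

lemma Qstar_eq: "Qstar v p a lam x = P_lam p lam x + Q x" unfolding Qstar_def Q_def ..

lemma Gkey:
  assumes x: "v (x - 1) \<le> R" and y: "v (y - 1) \<le> R"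
  shows "v ((Qstar v p a lam x - x) - (Qstar v p a lam y - y) - cc * (x - y)) \<le> N * v (x - y)"
proof -
  have e: "(Qstar v p a lam x - x) - (Qstar v p a lam y - y) - cc * (x - y)
     = (P_lam p lam x - P_lam p lam y - c1 * (x - y)) + (Q x - Q y)"
    unfolding Qstar_eq cc_def c1_def by (simp add: algebra_simps)
  have "v (P_lam p lam x - P_lam p lam y - c1 * (x - y)) \<le> real p * R * v (x - y)"
    using Pkey[OF R0 _ x y] R1 by simp
  also have "real p * R = v (Q 1)" unfolding R_def using pgt by simp
  also have "v (Q 1) * v (x - y) \<le> N * v (x - y)" using Q1 vge by (simp add: mult_right_mono)
  finally have 1: "v (P_lam p lam x - P_lam p lam y - c1 * (x - y)) \<le> N * v (x - y)" .
  have 2: "v (Q x - Q y) \<le> N * v (x - y)" using Qlip vle1 x y R1 by simp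
  show ?thesis unfolding e using 1 2 vadd by (meson max.boundedI order_trans)
qed

lemma Tcontr:
  assumes x: "v (x - 1) \<le> R" and y: "v (y - 1) \<le> R"
  shows "v (T x - T y) \<le> (N / real p) * v (x - y)"
proof -
  have e: "T x - T y = - ((Qstar v p a lam x - x) - (Qstar v p a lam y - y) - cc * (x - y)) / cc"
    unfolding T_def using ccnz by (simp add: field_simps)
  show ?thesis unfolding e vdiv vneg vcc using Gkey[OF x y] pgt by (simp add: divide_right_mono)
qed

lemma T1: "v (T 1 - 1) = R"
proof -
  have "P_lam p lam 1 = 1" unfolding Pform by simp
  then have "T 1 - 1 = - Q 1 / cc" unfolding T_def Qstar_eq by simp
  then show ?thesis unfolding R_def using vdiv vcc by simp
qed

lemma Tdisc: "v (x - 1) \<le> R \<Longrightarrow> v (T x - 1) \<le> R"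
proof -
  assume x: "v (x - 1) \<le> R"
  have "v (T x - T 1) \<le> (N / real p) * v (x - 1)" using Tcontr[OF x] R0 by simp
  also have "\<dots> \<le> 1 * R" using x N0 Nk N1 by (intro mult_mono) (auto simp: vge)
  finally have 1: "v (T x - T 1) \<le> R" by simp
  have "T x - 1 = (T x - T 1) + (T 1 - 1)" by simp
  then show ?thesis using vadd[of "T x - T 1" "T 1 - 1"] 1 T1 by simp
qed

lemma k1: "N / real p < 1" using Nk N1 by linarith
lemma k0: "0 \<le> N / real p" using N0 pgt by simp

lemma fix_unique:
  assumes x: "v (x - 1) \<le> R" "Qstar v p a lam x = x" and y: "v (y - 1) \<le> R" "Qstar v p a lam y = y"
  shows "x = y"
proof -
  have "T x = x" "T y = y" unfolding T_def using x y by simp_all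
  then have "v (x - y) \<le> (N / real p) * v (x - y)" using Tcontr[OF x(1) y(1)] by simp
  then have "v (x - y) \<le> 0" using k1 vge[of "x - y"]
    by (metis mult_less_cancel_right2 not_le order_le_less)
  then show ?thesis using vge[of "x-y"] vz by force
qed

lemma fix_exists: "\<exists>L. v (L - 1) \<le> R \<and> Qstar v p a lam L = L"
proof -
  define w where "w n = (T ^^ n) 1" for n
  define k where "k = N / real p"
  have wS: "w (Suc n) = T (w n)" for n unfolding w_def by simp
  have wd: "v (w n - 1) \<le> R" for n
    by (induction n) (auto simp: w_def R0 Tdisc)
  have wc: "\<forall>m. v (w (m + n) - w n) \<le> k ^ n * R" for n
  proof (induction n)
    case 0 then show ?case using wd by (simp add: w_def)
  next
    case (Suc n)
    show ?case
    proof
      fix m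
      have "v (w (m + Suc n) - w (Suc n)) = v (T (w (m + n)) - T (w n))" by (simp add: wS)
      also have "\<dots> \<le> k * v (w (m + n) - w n)" unfolding k_def using Tcontr wd by blast
      also have "\<dots> \<le> k * (k ^ n * R)"
        by (intro mult_left_mono) (use Suc.IH k0 k_def in auto)
      finally show "v (w (m + Suc n) - w (Suc n)) \<le> k ^ Suc n * R" by simp
    qed
  qed
  have kt: "(\<lambda>n. k ^ n * R) \<longlonglongrightarrow> 0"
  proof -
    have "(\<lambda>n. k ^ n) \<longlonglongrightarrow> 0" using k0 k1 unfolding k_def by (intro LIMSEQ_power_zero) simp
    from tendsto_mult[OF this tendsto_const[of R]] show ?thesis by simp
  qed
  have "v_cauchy v w" unfolding v_cauchy_def
  proof (intro allI impI)
    fix e :: real assume e: "0 < e"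
    from order_tendstoD(2)[OF kt e] obtain M where M: "\<And>n. n \<ge> M \<Longrightarrow> k ^ n * R < e"
      unfolding eventually_sequentially by blast
    have "v (w m - w n) < e" if "m \<ge> M" "n \<ge> M" for m n
    proof (cases "n \<le> m")
      case True
      then have "m = (m - n) + n" by simp
      then have "v (w m - w n) \<le> k ^ n * R" using wc[of n] by metis
      then show ?thesis using M[OF that(2)] by simp
    next
      case False
      then have "n = (n - m) + m" by simp
      then have "v (w n - w m) \<le> k ^ m * R" using wc[of m] by metis
      then show ?thesis using M[OF that(1)] vcomm by simp
    qed
    then show "\<exists>M. \<forall>m\<ge>M. \<forall>n\<ge>M. v (w m - w n) < e" by blast
  qed
  then obtain L where L: "v_lim v w L" using vcomp unfolding v_complete_def by blast
  have c1l: "v_lim v (\<lambda>n. 1) 1" unfolding v_lim_def by simp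
  have vL: "v (L - 1) \<le> R" using lim_bound[OF lim_diff[OF L c1l]] wd by simp
  have l1: "v_lim v (\<lambda>n. w (Suc n)) (T L)"
  proof (rule lim_squeeze)
    show "(\<lambda>n. k * v (w n - L)) \<longlonglongrightarrow> 0"
      using tendsto_mult[OF tendsto_const[of k] L[unfolded v_lim_def]] by simp
    fix n show "v (w (Suc n) - T L) \<le> k * v (w n - L)"
      unfolding wS k_def using Tcontr[OF wd vL] .
  qed
  have l2: "v_lim v (\<lambda>n. w (Suc n)) L" using L unfolding v_lim_def by (rule LIMSEQ_Suc)
  have "T L = L" using lim_unique[OF l1 l2] .
  then have "(Qstar v p a lam L - L) / cc = 0" unfolding T_def by (simp add: algebra_simps)
  then have "Qstar v p a lam L = L" using ccnz by simp
  then show ?thesis using vL by blast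
qed

definition "h = h_fix v p a lam"

lemma h_props: "v (h - 1) \<le> R" "Qstar v p a lam h = h"
proof -
  obtain L where L: "v (L - 1) \<le> R" "Qstar v p a lam L = L" using fix_exists by blast
  have "h = L" unfolding h_def h_fix_def
  proof (rule the_equality)
    show "v (L - 1) \<le> v (ps_eval v a 1) / real p \<and> Qstar v p a lam L = L"
      using L unfolding R_def Q_def by simp
    fix w assume "v (w - 1) \<le> v (ps_eval v a 1) / real p \<and> Qstar v p a lam w = w"
    then show "w = L" using fix_unique L unfolding R_def Q_def by blast
  qed
  then show "v (h - 1) \<le> R" "Qstar v p a lam h = h" using L by simp_all
qed

end
context setting begin

lemma Qlam_eq: "Q_lam v p a lam z = P_lam p lam (z + h - 1) + (Q (z + h - 1) - (h - 1))"
  unfolding Q_lam_def h_def Q_def Let_def by (simp add: algebra_simps)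

lemma small: "v z \<le> rhat \<Longrightarrow> v (Q z - (h - 1)) < rho p"
proof -
  assume z: "v z \<le> rhat"
  have "v (Q z) < rho p" using Qbound[OF z] N_rho by simp
  moreover have "v (h - 1) < rho p" using h_props(1) Rrho by simp
  ultimately show ?thesis using vdiff[of "Q z" "h - 1"] by simp
qed

lemma wval: "v (h - 1) < v z \<Longrightarrow> v (z + h - 1) = v z"
proof -
  assume "v (h - 1) < v z"
  then have "v (z + (h - 1)) = v z" by (rule vstrict)
  then show ?thesis by (metis add_diff_eq)
qed

lemma part1:
  assumes z: "rho p < v z" "v z < 1"
  shows "v (Q_lam v p a lam z) = real p * v z ^ p \<and> real p * v z ^ p > v z"
proof -
  define w where "w = z + h - 1"
  have hR: "v (h - 1) < v z" using h_props(1) Rrho z by simp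
  have vw: "v w = v z" unfolding w_def using wval[OF hR] .
  have r0: "0 < rho p" using rho_facts by simp
  have vz0: "0 < v z" using z r0 by simp
  have pm: "p = Suc (p - 1)" using p2 by simp
  have "rho p ^ (p - 1) < v z ^ (p - 1)" using z r0 p2 by (intro power_strict_mono) auto
  then have "1 < real p * v z ^ (p - 1)" using rho_facts(3) pgt by (metis mult_strict_left_mono less_trans zero_less_one)
  note gt1 = this
  have "v z ^ p = v z * v z ^ (p - 1)" using pm by (metis power_Suc)
  then have eq: "real p * v z ^ p = v z * (real p * v z ^ (p - 1))" by (simp only: mult.left_commute)
  have lt: "v z * 1 < v z * (real p * v z ^ (p - 1))" by (rule mult_strict_left_mono[OF gt1 vz0])
  have big: "v z < real p * v z ^ p" unfolding eq using lt by (simp only: mult_1_right)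
  have e: "P_lam p lam w = lp * w ^ p * (1 - w) + w ^ (p + 1)"
    unfolding Pform by (simp add: algebra_simps)
  have v1w: "v (1 - w) = 1" using vstrict[of "- w" 1] vw z by simp
  have vA: "v (lp * w ^ p * (1 - w)) = real p * v z ^ p" unfolding vmult vpow vlp v1w vw by simp
  have "v (w ^ (p + 1)) = v z * v z ^ p" unfolding vpow vw by simp
  also have "\<dots> < real p * v z ^ p" using z vz0 pgt by (intro mult_strict_right_mono) auto
  finally have vP: "v (P_lam p lam w) = real p * v z ^ p" unfolding e using vstrict vA by metis
  have "v (Q w - (h - 1)) < real p * v z ^ p" using small[of w] vw z rhat_gt big by simp
  then have "v (Q_lam v p a lam z) = real p * v z ^ p" unfolding Qlam_eq w_def[symmetric]
    using vstrict vP by metis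
  then show ?thesis using big by simp
qed

lemma part2:
  assumes z: "v z \<le> rho p"
  shows "v (Q_lam v p a lam z) \<le> rho p"
proof -
  define w where "w = z + h - 1"
  have "w = z + (h - 1)" unfolding w_def by simp
  then have vw: "v w \<le> rho p" using vadd[of z "h - 1"] h_props(1) Rrho z by simp
  have w1: "v w \<le> 1" using vw rho_facts by simp
  have "v (lp * w ^ p) \<le> real p * rho p ^ p" unfolding vmult vlp vpow
    using mult_left_mono[OF power_mono[OF vw vge], of "real p" p] by simp
  then have 1: "v (lp * w ^ p) \<le> rho p" using rho_facts by simp
  have "v w ^ (p + 1) \<le> v w ^ p" using w1 vge by (simp add: mult_left_le_one_le)
  also have "\<dots> \<le> rho p ^ p" using vw vge by (simp add: power_mono)
  finally have "v ((1 - lp) * w ^ (p + 1)) \<le> real p * rho p ^ p" unfolding vmult v1lp vpow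
    using pgt by simp
  then have 2: "v ((1 - lp) * w ^ (p + 1)) \<le> rho p" using rho_facts by simp
  have vP: "v (P_lam p lam w) \<le> rho p" unfolding Pform using 1 2 vadd by (meson max.boundedI order_trans)
  have "v (Q w - (h - 1)) < rho p" using small[of w] vw rho_facts rhat_gt by simp
  then show ?thesis unfolding Qlam_eq w_def[symmetric] using vP vadd
    by (meson max.boundedI order_trans less_imp_le)
qed

lemma part4:
  assumes z: "1 < v z" "v z < rhat"
  shows "v (Q_lam v p a lam z) = real p * v z ^ (p + 1)"
proof -
  define w where "w = z + h - 1"
  have hR: "v (h - 1) < v z" using h_props(1) R1 z by simp
  have vw: "v w = v z" unfolding w_def using wval[OF hR] .
  have e: "P_lam p lam w = (1 - lp) * w ^ (p + 1) + lp * w ^ p"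
    unfolding Pform by (simp add: algebra_simps)
  have vA: "v ((1 - lp) * w ^ (p + 1)) = real p * v z ^ (p + 1)" unfolding vmult vpow v1lp vw ..
  have "v (lp * w ^ p) = real p * v z ^ p" unfolding vmult vpow vlp vw ..
  also have "\<dots> < real p * v z ^ (p + 1)" using z pgt by (intro mult_strict_left_mono power_strict_increasing) auto
  finally have vP: "v (P_lam p lam w) = real p * v z ^ (p + 1)" unfolding e using vstrict vA by metis
  have "1 \<le> v z ^ (p + 1)" using z by (intro one_le_power) simp
  then have "1 * 1 < real p * v z ^ (p + 1)" using pgt by (intro mult_less_le_imp_less) auto
  then have "1 < real p * v z ^ (p + 1)" by simp
  then have "v (Q w - (h - 1)) < real p * v z ^ (p + 1)" using small[of w] vw z rho_facts by simp
  then show ?thesis unfolding Qlam_eq w_def[symmetric] using vstrict vP by metis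
qed

lemma part3:
  assumes z: "v (z - 1) < 1"
  shows "v (Q_lam v p a lam z - 1) = real p * v (z - 1)"
proof -
  define u where "u = z - 1"
  define w where "w = z + h - 1"
  have wu: "w = h + u" unfolding w_def u_def by simp
  have hfix: "P_lam p lam h + Q h = h" using h_props(2) unfolding Qstar_eq .
  have e: "Q_lam v p a lam z - 1 = c1 * u + ((P_lam p lam w - P_lam p lam h - c1 * (w - h)) + (Q w - Q h))"
    unfolding Qlam_eq w_def[symmetric] using hfix wu by (simp add: algebra_simps)
  show ?thesis
  proof (cases "u = 0")
    case True
    then show ?thesis unfolding e u_def[symmetric] using wu by simp
  next
    case False
    then have vu: "0 < v u" using vz vge by (metis order_le_less)
    define r where "r = max (v u) R"
    have r0: "0 \<le> r" "r \<le> 1" "r < 1" unfolding r_def using vge R0 R1 z u_def by auto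
    have hr: "v (h - 1) \<le> r" unfolding r_def using h_props(1) by simp
    have ew: "w - 1 = u + (h - 1)" using wu by simp
    have "v (w - 1) \<le> max (v u) (v (h - 1))" unfolding ew by (rule vadd)
    then have wr: "v (w - 1) \<le> r" unfolding r_def using h_props(1) by auto
    have wh: "w - h = u" using wu by simp
    have 1: "v (P_lam p lam w - P_lam p lam h - c1 * (w - h)) \<le> real p * r * v u"
      using Pkey[OF r0(1,2) wr hr] wh by simp
    have "real p * r * v u < real p * v u" using r0 vu pgt by simp
    then have b1: "v (P_lam p lam w - P_lam p lam h - c1 * (w - h)) < real p * v u" using 1 by linarith
    have "v (Q w - Q h) \<le> N * v u" using Qlip[of w h] vle1 wr hr r0 wh by simp
    also have "\<dots> < real p * v u" using N1 pgt vu by simp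
    finally have 2: "v (Q w - Q h) < real p * v u" .
    have 3: "v ((P_lam p lam w - P_lam p lam h - c1 * (w - h)) + (Q w - Q h)) < real p * v u"
      using b1 2 vadd[of "P_lam p lam w - P_lam p lam h - c1 * (w - h)" "Q w - Q h"] by linarith
    have "v (c1 * u) = real p * v u" unfolding vmult vc1 ..
    then show ?thesis unfolding e u_def[symmetric] using vstrict 3 by metis
  qed
qed

end
theorem lemma3p5:
  fixes v :: "'a::{alg_closed_field, field_char_0} \<Rightarrow> real"
    and p :: nat and rhat :: real and a :: "nat \<Rightarrow> 'a" and lam z :: 'a
  assumes Cp: "is_Cp p v"
    and rhat_val: "\<exists>c. c \<noteq> 0 \<and> v c = rhat"
    and rhat_gt: "rhat > 1"
    and Q_HB: "in_HB v rhat a"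
    and Q_norm: "HB_norm v rhat a < rho p"
    and lam: "v (lam - 1) < 1"
  shows "(rho p < v z \<and> v z < 1 \<longrightarrow>
            v (Q_lam v p a lam z) = real p * v z ^ p \<and> real p * v z ^ p > v z)
       \<and> (v z \<le> rho p \<longrightarrow> v (Q_lam v p a lam z) \<le> rho p)
       \<and> (v (z - 1) < 1 \<longrightarrow> v (Q_lam v p a lam z - 1) = real p * v (z - 1))
       \<and> (1 < v z \<and> v z < rhat \<longrightarrow> v (Q_lam v p a lam z) = real p * v z ^ (p + 1))"
proof -
  obtain c where c: "v c = rhat" using rhat_val by blast
  have s: "setting v p rhat a lam c"
    unfolding setting_def setting_axioms_def vfield_def
    using Cp c rhat_gt Q_HB Q_norm lam unfolding is_Cp_def by auto
  show ?thesis
    using setting.part1[OF s] setting.part2[OF s] setting.part3[OF s] setting.part4[OF s] by blast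
qed

end
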